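(* Let $\mathbf{X}\subseteq\mathbb{R}_+^n$ be a closed interval and $\mathrm{IC}(\mathbf{a}_0,\dots,\mathbf{a}_{n-1})$ an interval circulant matrix. Then $\mathrm{IC}(\mathbf{a}_0,\dots,\mathbf{a}_{n-1})$ is tolerance $\mathbf{X}$-robust, i.e. for every $A\in\mathrm{IC}(\mathbf{a}_0,\dots,\mathbf{a}_{n-1})$ there exists $x\in\mathbf{X}$ with $x\in\mathrm{Attr}(A)$, if and only if $\mathrm{Attr}(A^{(k)})\cap\mathbf{X}\ne\emptyset$ for every $k\in\{0,\dots,n-1\}$. Equivalently, if and only if for every $k$ with $A^{(k)}\neq0$ the system $\lambda(A^{(k)})(A^{(k)})^{n^2}\otimes y=(A^{(k)})^{n^2+1}\otimes y$ has a solution $y\in\mathbf{X}$.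
   Context: Max algebra on $\mathbb{R}_+$: $\oplus=\max$, ordinary product, $A^t$ max-algebraic power; $\lambda(A)$ greatest max-algebraic eigenvalue (maximum cycle geometric mean); $\mathrm{Attr}(A)=\{x\in\mathbb{R}_+^n: A^{t+1}\otimes x=\lambda(A)A^t\otimes x\text{ for some }t\ge0\}$. A closed interval is $\mathbf{X}=\prod_i[\underline{x}_i,\overline{x}_i]\subseteq\mathbb{R}_+^n$. $\mathrm{Circ}(a_0,\dots,a_{n-1})$ has entries $A_{i,j}=a_t$, $t\equiv j-i\pmod n$; $\mathrm{IC}(\mathbf{a}_0,\dots,\mathbf{a}_{n-1})$ is the set of all $\mathrm{Circ}(a_0,\dots,a_{n-1})$ with $a_t\in\mathbf{a}_t$, each $\mathbf{a}_t\subseteq\mathbb{R}_+$ a nonempty interval of one of the forms $[\underline{a}_t,\overline{a}_t]$, $(\underline{a}_t,\overline{a}_t)$, $(\underline{a}_t,\overline{a}_t]$, $[\underline{a}_t,\overline{a}_t)$. $A^{(k)}=\mathrm{Circ}(\underline{a}_0,\dots,\underline{a}_{k-1},\overline{a}_k,\underline{a}_{k+1},\dots,\underline{a}_{n-1})$. *)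

theory Defs
  imports Complex_Main
begin

text \<open>Max algebra on nonnegative reals. Matrices of size n are functions
  nat => nat => real, vectors are nat => real; only indices < n matter.\<close>

definition mx_mult :: "nat \<Rightarrow> (nat \<Rightarrow> nat \<Rightarrow> real) \<Rightarrow> (nat \<Rightarrow> nat \<Rightarrow> real) \<Rightarrow> (nat \<Rightarrow> nat \<Rightarrow> real)" where
  "mx_mult n A B = (\<lambda>i j. MAX k\<in>{..<n}. A i k * B k j)"

definition mx_vec :: "nat \<Rightarrow> (nat \<Rightarrow> nat \<Rightarrow> real) \<Rightarrow> (nat \<Rightarrow> real) \<Rightarrow> (nat \<Rightarrow> real)" where
  "mx_vec n A x = (\<lambda>i. MAX k\<in>{..<n}. A i k * x k)"

definition mx_id :: "nat \<Rightarrow> nat \<Rightarrow> real" where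
  "mx_id = (\<lambda>i j. if i = j then 1 else 0)"

primrec mx_pow :: "nat \<Rightarrow> (nat \<Rightarrow> nat \<Rightarrow> real) \<Rightarrow> nat \<Rightarrow> (nat \<Rightarrow> nat \<Rightarrow> real)" where
  "mx_pow n A 0 = mx_id"
| "mx_pow n A (Suc t) = mx_mult n A (mx_pow n A t)"

text \<open>Maximum cycle geometric mean: cycles (closed walks) of length k, 1 <= k <= n,
  given as lists of nodes.\<close>
definition mx_lambda :: "nat \<Rightarrow> (nat \<Rightarrow> nat \<Rightarrow> real) \<Rightarrow> real" where
  "mx_lambda n A = Max {root k (\<Prod>j<k. A (cs ! j) (cs ! ((j + 1) mod k))) | k cs.
      1 \<le> k \<and> k \<le> n \<and> length cs = k \<and> set cs \<subseteq> {..<n}}"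

definition nonneg_vec :: "nat \<Rightarrow> (nat \<Rightarrow> real) \<Rightarrow> bool" where
  "nonneg_vec n x \<longleftrightarrow> (\<forall>i<n. 0 \<le> x i)"

definition vec_eq :: "nat \<Rightarrow> (nat \<Rightarrow> real) \<Rightarrow> (nat \<Rightarrow> real) \<Rightarrow> bool" where
  "vec_eq n x y \<longleftrightarrow> (\<forall>i<n. x i = y i)"

definition Attr :: "nat \<Rightarrow> (nat \<Rightarrow> nat \<Rightarrow> real) \<Rightarrow> (nat \<Rightarrow> real) set" where
  "Attr n A = {x. nonneg_vec n x \<and> (\<exists>t. vec_eq n (mx_vec n (mx_pow n A (Suc t)) x)
                     (\<lambda>i. mx_lambda n A * mx_vec n (mx_pow n A t) x i))}"

definition box :: "nat \<Rightarrow> (nat \<Rightarrow> real) \<Rightarrow> (nat \<Rightarrow> real) \<Rightarrow> (nat \<Rightarrow> real) set" where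
  "box n lo hi = {x. \<forall>i<n. lo i \<le> x i \<and> x i \<le> hi i}"

definition Circ :: "nat \<Rightarrow> (nat \<Rightarrow> real) \<Rightarrow> (nat \<Rightarrow> nat \<Rightarrow> real)" where
  "Circ n a = (\<lambda>i j. a ((j + n - i) mod n))"

definition ival :: "real \<Rightarrow> real \<Rightarrow> bool \<Rightarrow> bool \<Rightarrow> real set" where
  "ival lo hi lc rc = {x. (if lc then lo \<le> x else lo < x) \<and> (if rc then x \<le> hi else x < hi)}"

definition IC :: "nat \<Rightarrow> (nat \<Rightarrow> real) \<Rightarrow> (nat \<Rightarrow> real) \<Rightarrow> (nat \<Rightarrow> bool) \<Rightarrow> (nat \<Rightarrow> bool)
    \<Rightarrow> (nat \<Rightarrow> nat \<Rightarrow> real) set" where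
  "IC n alo ahi lc rc = {Circ n a | a. \<forall>t<n. a t \<in> ival (alo t) (ahi t) (lc t) (rc t)}"

definition Ak :: "nat \<Rightarrow> (nat \<Rightarrow> real) \<Rightarrow> (nat \<Rightarrow> real) \<Rightarrow> nat \<Rightarrow> (nat \<Rightarrow> nat \<Rightarrow> real)" where
  "Ak n alo ahi k = Circ n (\<lambda>t. if t = k then ahi t else alo t)"

definition tol_robust :: "nat \<Rightarrow> (nat \<Rightarrow> nat \<Rightarrow> real) set \<Rightarrow> (nat \<Rightarrow> real) set \<Rightarrow> bool" where
  "tol_robust n \<AA> X \<longleftrightarrow> (\<forall>A\<in>\<AA>. \<exists>x\<in>X. x \<in> Attr n A)"

definition is_zero_mx :: "nat \<Rightarrow> (nat \<Rightarrow> nat \<Rightarrow> real) \<Rightarrow> bool" where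
  "is_zero_mx n A \<longleftrightarrow> (\<forall>i<n. \<forall>j<n. A i j = 0)"

end

theory Submission
  imports Defs
begin


lemma mod_add_cancel_nat: "((a::nat) + c) mod n = (b + c) mod n \<Longrightarrow> a mod n = b mod n"
proof -
  assume h: "(a + c) mod n = (b + c) mod n"
  have "int (a + c) mod int n = int (b + c) mod int n" using h by (metis of_nat_mod)
  then have "(int a + int c) mod int n = (int b + int c) mod int n" by simp
  then have "int a mod int n = int b mod int n" by (metis add_diff_cancel mod_diff_left_eq)
  then show ?thesis by (metis of_nat_eq_iff of_nat_mod)
qed

lemma surj_mod_shift: "0 < n \<Longrightarrow> (\<lambda>u. (u + m) mod n) ` {..<(n::nat)} = {..<n}"
proof -
  assume n: "0 < n"
  have "inj_on (\<lambda>u. (u + m) mod n) {..<n}"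
    by (auto simp: inj_on_def dest!: mod_add_cancel_nat)
  then show ?thesis using n by (intro endo_inj_surj) auto
qed

lemma circ_idx: "i < n \<Longrightarrow> t < (n::nat) \<Longrightarrow> (((i + t) mod n) + n - i) mod n = t"
proof -
  assume a: "i < n" "t < n"
  have "(((i + t) mod n) + n - i + i) mod n = (t + i) mod n"
    using a by (simp add: mod_add_left_eq add.commute)
  then have "(((i + t) mod n) + n - i) mod n = t mod n" by (rule mod_add_cancel_nat)
  with a show ?thesis by simp
qed



definition lens :: "nat \<Rightarrow> nat \<Rightarrow> nat list set" where
  "lens n s = {ws. set ws \<subseteq> {..<n} \<and> length ws = s}"

definition Wv :: "nat \<Rightarrow> (nat \<Rightarrow> real) \<Rightarrow> nat \<Rightarrow> (nat \<Rightarrow> real) \<Rightarrow> nat \<Rightarrow> real" where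
  "Wv n q s y j = (MAX ws\<in>lens n s. prod_list (map q ws) * y ((j + sum_list ws) mod n))"

lemma lens_finite: "finite (lens n s)"
  unfolding lens_def by (rule finite_lists_length_eq) simp

lemma lens_ne: "0 < n \<Longrightarrow> lens n s \<noteq> {}"
  unfolding lens_def by (auto intro!: exI[of _ "replicate s 0"])

lemma replicate_in_lens: "0 < n \<Longrightarrow> replicate s 0 \<in> lens n s"
  unfolding lens_def by auto

lemma Wv_ge: "ws \<in> lens n s \<Longrightarrow> prod_list (map q ws) * y ((j + sum_list ws) mod n) \<le> Wv n q s y j"
  unfolding Wv_def using lens_finite by (intro Max_ge) auto

lemma Wv_obtain: "0 < n \<Longrightarrow> \<exists>ws\<in>lens n s. Wv n q s y j = prod_list (map q ws) * y ((j + sum_list ws) mod n)"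
proof -
  assume n: "0 < n"
  have "Wv n q s y j \<in> (\<lambda>ws. prod_list (map q ws) * y ((j + sum_list ws) mod n)) ` lens n s"
    unfolding Wv_def using lens_finite lens_ne[OF n] by (intro Max_in) auto
  then show ?thesis by auto
qed

lemma Wv_le: "0 < n \<Longrightarrow> (\<And>ws. ws \<in> lens n s \<Longrightarrow> prod_list (map q ws) * y ((j + sum_list ws) mod n) \<le> c) \<Longrightarrow> Wv n q s y j \<le> c"
  using Wv_obtain by metis

lemma lens_Suc: "u # ws \<in> lens n (Suc s) \<longleftrightarrow> u < n \<and> ws \<in> lens n s"
  unfolding lens_def by auto

lemma lens_Suc_cases: "ws \<in> lens n (Suc s) \<Longrightarrow> \<exists>u ws'. ws = u # ws' \<and> u < n \<and> ws' \<in> lens n s"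
  unfolding lens_def by (cases ws) auto

lemma Max_lessThan_ge: "t < (n::nat) \<Longrightarrow> f t \<le> (MAX u\<in>{..<n}. f u)"
  by (intro Max_ge) auto

lemma Max_lessThan_obtain: "0 < (n::nat) \<Longrightarrow> \<exists>u<n. (MAX u\<in>{..<n}. f u) = (f u :: real)"
proof -
  assume "0 < n"
  then have "(MAX u\<in>{..<n}. f u) \<in> f ` {..<n}" by (intro Max_in) auto
  then show ?thesis by auto
qed

lemma Wv_Suc:
  assumes n: "0 < n" and q: "\<forall>u<n. 0 \<le> q u"
  shows "Wv n q (Suc s) y j = (MAX u\<in>{..<n}. q u * Wv n q s y ((j + u) mod n))"
proof (rule antisym)
  show "Wv n q (Suc s) y j \<le> (MAX u\<in>{..<n}. q u * Wv n q s y ((j + u) mod n))"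
  proof (rule Wv_le[OF n])
    fix ws assume "ws \<in> lens n (Suc s)"
    then obtain u ws' where ws: "ws = u # ws'" "u < n" "ws' \<in> lens n s" using lens_Suc_cases by blast
    have "prod_list (map q ws) * y ((j + sum_list ws) mod n)
        = q u * (prod_list (map q ws') * y (((j + u) mod n + sum_list ws') mod n))"
      using ws by (simp add: mod_simps add.assoc)
    also have "\<dots> \<le> q u * Wv n q s y ((j + u) mod n)"
      using ws q by (intro mult_left_mono Wv_ge) auto
    also have "\<dots> \<le> (MAX u\<in>{..<n}. q u * Wv n q s y ((j + u) mod n))"
      using ws by (intro Max_lessThan_ge)
    finally show "prod_list (map q ws) * y ((j + sum_list ws) mod n) \<le> \<dots>" .
  qed
next
  obtain u where u: "u < n" "(MAX u\<in>{..<n}. q u * Wv n q s y ((j + u) mod n)) = q u * Wv n q s y ((j + u) mod n)"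
    using Max_lessThan_obtain[OF n] by blast
  obtain ws where ws: "ws \<in> lens n s" "Wv n q s y ((j + u) mod n) = prod_list (map q ws) * y (((j + u) mod n + sum_list ws) mod n)"
    using Wv_obtain[OF n] by blast
  have "(MAX u\<in>{..<n}. q u * Wv n q s y ((j + u) mod n)) = prod_list (map q (u # ws)) * y ((j + sum_list (u # ws)) mod n)"
    using u ws by (simp add: mod_simps add.assoc)
  also have "\<dots> \<le> Wv n q (Suc s) y j"
    using u ws by (intro Wv_ge) (simp add: lens_Suc)
  finally show "(MAX u\<in>{..<n}. q u * Wv n q s y ((j + u) mod n)) \<le> Wv n q (Suc s) y j" .
qed

lemma Wv_0: "j < n \<Longrightarrow> Wv n q 0 y j = y j"
  unfolding Wv_def lens_def by simp

definition nonneg_mx :: "(nat \<Rightarrow> nat \<Rightarrow> real) \<Rightarrow> bool" where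
  "nonneg_mx A \<longleftrightarrow> (\<forall>i j. 0 \<le> A i j)"

lemma nonneg_mx_mult: "0 < n \<Longrightarrow> nonneg_mx A \<Longrightarrow> nonneg_mx B \<Longrightarrow> nonneg_mx (mx_mult n A B)"
proof -
  assume n: "0 < n" and A: "nonneg_mx A" and B: "nonneg_mx B"
  show ?thesis unfolding nonneg_mx_def mx_mult_def
  proof (intro allI)
    fix i j
    have "0 \<le> A i 0 * B 0 j" using A B by (simp add: nonneg_mx_def)
    also have "\<dots> \<le> (MAX k\<in>{..<n}. A i k * B k j)" using n by (intro Max_lessThan_ge)
    finally show "0 \<le> (MAX k\<in>{..<n}. A i k * B k j)" .
  qed
qed

lemma nonneg_mx_pow: "0 < n \<Longrightarrow> nonneg_mx A \<Longrightarrow> nonneg_mx (mx_pow n A s)"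
proof (induction s)
  case 0 then show ?case by (simp add: nonneg_mx_def mx_id_def)
next
  case (Suc s) then show ?case by (simp add: nonneg_mx_mult)
qed

lemma mx_vec_assoc:
  assumes n: "0 < n" and A: "nonneg_mx A" and B: "nonneg_mx B" and x: "nonneg_vec n x"
  shows "mx_vec n (mx_mult n A B) x i = mx_vec n A (mx_vec n B x) i"
proof (rule antisym)
  show "mx_vec n (mx_mult n A B) x i \<le> mx_vec n A (mx_vec n B x) i"
    unfolding mx_vec_def
  proof (rule Max.boundedI)
    fix z assume "z \<in> (\<lambda>k. mx_mult n A B i k * x k) ` {..<n}"
    then obtain k where k: "k < n" "z = mx_mult n A B i k * x k" by auto
    obtain l where l: "l < n" "(MAX l\<in>{..<n}. A i l * B l k) = A i l * B l k"
      using Max_lessThan_obtain[OF n, of "\<lambda>l. A i l * B l k"] by blast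
    have l2: "mx_mult n A B i k = A i l * B l k" using l(2) by (simp add: mx_mult_def)
    have "z = A i l * (B l k * x k)" using k l2 by simp
    also have "\<dots> \<le> A i l * (MAX k\<in>{..<n}. B l k * x k)"
      using A k by (intro mult_left_mono Max_lessThan_ge) (auto simp: nonneg_mx_def)
    also have "\<dots> \<le> (MAX l\<in>{..<n}. A i l * (MAX k\<in>{..<n}. B l k * x k))"
      using l by (intro Max_lessThan_ge)
    finally show "z \<le> (MAX l\<in>{..<n}. A i l * (MAX k\<in>{..<n}. B l k * x k))" .
  qed (use n in auto)
next
  show "mx_vec n A (mx_vec n B x) i \<le> mx_vec n (mx_mult n A B) x i"
    unfolding mx_vec_def
  proof (rule Max.boundedI)
    fix z assume "z \<in> (\<lambda>l. A i l * (MAX k\<in>{..<n}. B l k * x k)) ` {..<n}"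
    then obtain l where l: "l < n" "z = A i l * (MAX k\<in>{..<n}. B l k * x k)" by auto
    obtain k where k: "k < n" "(MAX k\<in>{..<n}. B l k * x k) = B l k * x k"
      using Max_lessThan_obtain[OF n, of "\<lambda>k. B l k * x k"] by blast
    have "z = (A i l * B l k) * x k" using k l by simp
    also have "\<dots> \<le> mx_mult n A B i k * x k"
      unfolding mx_mult_def using x k l
      by (intro mult_right_mono Max_lessThan_ge) (auto simp: nonneg_vec_def)
    also have "\<dots> \<le> (MAX k\<in>{..<n}. mx_mult n A B i k * x k)"
      using k by (intro Max_lessThan_ge)
    finally show "z \<le> (MAX k\<in>{..<n}. mx_mult n A B i k * x k)" .
  qed (use n in auto)
qed

lemma mx_vec_id: "i < n \<Longrightarrow> nonneg_vec n x \<Longrightarrow> mx_vec n mx_id x i = x i"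
proof -
  assume i: "i < n" and x: "nonneg_vec n x"
  show ?thesis unfolding mx_vec_def
  proof (rule antisym)
    show "(MAX k\<in>{..<n}. mx_id i k * x k) \<le> x i"
      using i x by (intro Max.boundedI) (auto simp: mx_id_def nonneg_vec_def)
    show "x i \<le> (MAX k\<in>{..<n}. mx_id i k * x k)"
      using i Max_lessThan_ge[of i n "\<lambda>k. mx_id i k * x k"] by (simp add: mx_id_def)
  qed
qed

lemma nonneg_Circ: "0 < n \<Longrightarrow> \<forall>t<n. 0 \<le> c t \<Longrightarrow> nonneg_mx (Circ n c)"
  unfolding nonneg_mx_def Circ_def by auto

lemma mx_vec_Circ:
  assumes n: "0 < n" and i: "i < n"
  shows "mx_vec n (Circ n c) v i = (MAX t\<in>{..<n}. c t * v ((i + t) mod n))"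
proof -
  have "mx_vec n (Circ n c) v i = (MAX k\<in>(\<lambda>t. (t + i) mod n) ` {..<n}. c ((k + n - i) mod n) * v k)"
    unfolding mx_vec_def Circ_def surj_mod_shift[OF n] ..
  also have "\<dots> = (MAX t\<in>{..<n}. c ((((t + i) mod n) + n - i) mod n) * v ((t + i) mod n))"
    by (simp add: image_image)
  also have "\<dots> = (MAX t\<in>{..<n}. c t * v ((i + t) mod n))"
  proof (intro arg_cong[where f=Max] image_cong refl)
    fix t assume "t \<in> {..<n}"
    then have "(((i + t) mod n) + n - i) mod n = t" using i by (simp add: circ_idx)
    then show "c ((((t + i) mod n) + n - i) mod n) * v ((t + i) mod n) = c t * v ((i + t) mod n)"
      by (simp add: add.commute)
  qed
  finally show ?thesis .
qed

lemma pow_Circ_Wv: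
  assumes n: "0 < n" and c: "\<forall>t<n. 0 \<le> c t" and x: "nonneg_vec n x"
  shows "i < n \<Longrightarrow> mx_vec n (mx_pow n (Circ n c) s) x i = Wv n c s x i"
proof (induction s arbitrary: i)
  case 0
  then show ?case using x by (simp add: mx_vec_id Wv_0)
next
  case (Suc s)
  have "mx_vec n (mx_pow n (Circ n c) (Suc s)) x i = mx_vec n (Circ n c) (mx_vec n (mx_pow n (Circ n c) s) x) i"
    using n c x by (simp add: mx_vec_assoc nonneg_Circ nonneg_mx_pow)
  also have "\<dots> = (MAX t\<in>{..<n}. c t * mx_vec n (mx_pow n (Circ n c) s) x ((i + t) mod n))"
    using n Suc.prems by (rule mx_vec_Circ)
  also have "\<dots> = (MAX t\<in>{..<n}. c t * Wv n c s x ((i + t) mod n))"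
    using n by (intro arg_cong[where f=Max] image_cong refl) (simp add: Suc.IH)
  also have "\<dots> = Wv n c (Suc s) x i"
    using n c by (simp add: Wv_Suc)
  finally show ?case .
qed



lemma lambda_Circ:
  assumes n: "0 < n" and a: "\<forall>t<n. 0 \<le> a t"
  shows "mx_lambda n (Circ n a) = (MAX t\<in>{..<n}. a t)"
proof -
  let ?M = "MAX t\<in>{..<n}. a t"
  let ?A = "Circ n a"
  let ?f = "\<lambda>k cs. root k (\<Prod>j<k. ?A (cs ! j) (cs ! ((j + 1) mod k)))"
  let ?S = "{?f k cs | k cs. 1 \<le> k \<and> k \<le> n \<and> length cs = k \<and> set cs \<subseteq> {..<n}}"
  have entry: "0 \<le> ?A i j \<and> ?A i j \<le> ?M" for i j
    using n a unfolding Circ_def by (auto intro: Max_lessThan_ge)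
  have fin: "finite ?S"
  proof (rule finite_subset)
    show "?S \<subseteq> (\<lambda>cs. ?f (length cs) cs) ` {cs. set cs \<subseteq> {..<n} \<and> length cs \<le> n}"
      by auto
    show "finite ((\<lambda>cs. ?f (length cs) cs) ` {cs. set cs \<subseteq> {..<n} \<and> length cs \<le> n})"
      by (intro finite_imageI finite_lists_length_le) simp
  qed
  obtain t0 where t0: "t0 < n" "?M = a t0" using Max_lessThan_obtain[OF n, of a] by blast
  define cs where "cs = map (\<lambda>j. (j * t0) mod n) [0..<n]"
  have cs_len: "length cs = n" and cs_set: "set cs \<subseteq> {..<n}" using n by (auto simp: cs_def)
  have step: "?A (cs ! j) (cs ! ((j + 1) mod n)) = a t0" if j: "j < n" for j
  proof -
    have e1: "cs ! j = (j * t0) mod n" using j by (simp add: cs_def)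
    have e2: "cs ! ((j + 1) mod n) = (((j + 1) mod n) * t0) mod n" using n by (simp add: cs_def)
    also have "\<dots> = (cs ! j + t0) mod n" using e1 by (simp add: mod_simps algebra_simps)
    finally have e3: "cs ! ((j + 1) mod n) = (cs ! j + t0) mod n" .
    have "cs ! j < n" using e1 n by simp
    then show ?thesis unfolding Circ_def e3 using circ_idx[OF _ t0(1)] by simp
  qed
  have mem: "?f n cs \<in> ?S"
  proof -
    have "1 \<le> n \<and> n \<le> n \<and> length cs = n \<and> set cs \<subseteq> {..<n}" using n cs_len cs_set by simp
    then show ?thesis by blast
  qed
  have "?f n cs = root n (a t0 ^ n)" using step by simp
  also have "\<dots> = a t0" using n a t0 by (simp add: real_root_power_cancel)
  finally have "?M \<le> Max ?S" using Max_ge[OF fin mem] t0 by simp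
  moreover have "Max ?S \<le> ?M"
  proof (rule Max.boundedI[OF fin])
    show "?S \<noteq> {}" using mem by blast
    fix z assume "z \<in> ?S"
    then obtain k cs where k: "z = ?f k cs" "1 \<le> k" "k \<le> n" by blast
    have "(\<Prod>j<k. ?A (cs ! j) (cs ! ((j + 1) mod k))) \<le> (\<Prod>j<k. ?M)"
      by (intro prod_mono) (use entry in auto)
    then have "z \<le> root k (?M ^ k)" using k by (simp add: real_root_le_mono)
    also have "\<dots> = ?M" using k entry[of 0 0] by (simp add: real_root_power_cancel)
    finally show "z \<le> ?M" .
  qed
  ultimately show ?thesis unfolding mx_lambda_def by simp
qed



lemma prod_list_nonneg_q: "(\<forall>u\<in>set ws. 0 \<le> q u) \<Longrightarrow> 0 \<le> prod_list (map q ws :: real list)"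
  by (induction ws) auto

lemma prod_list_le1: "(\<forall>u\<in>set ws. 0 \<le> q u \<and> q u \<le> 1) \<Longrightarrow> prod_list (map q ws :: real list) \<le> 1"
proof (induction ws)
  case Nil then show ?case by simp
next
  case (Cons u ws)
  then have "0 \<le> prod_list (map q ws)" by (intro prod_list_nonneg_q) auto
  with Cons show ?case by (auto intro: mult_le_one)
qed

lemma prod_list_mono_q: "(\<forall>u\<in>set ws. 0 \<le> q' u \<and> q' u \<le> q u) \<Longrightarrow> prod_list (map q' ws :: real list) \<le> prod_list (map q ws)"
proof (induction ws)
  case Nil then show ?case by simp
next
  case (Cons u ws)
  then have "prod_list (map q' ws) \<le> prod_list (map q ws)" "0 \<le> prod_list (map q' ws)" "0 \<le> q' u" "q' u \<le> q u"
    by (auto intro: prod_list_nonneg_q)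
  then show ?case by (simp add: mult_mono)
qed

lemma sr0: "sum_list (replicate k (0::nat)) = 0"
  by (induction k) auto

lemma pigeon:
  assumes n: "0 < n" and q: "\<forall>u<n. 0 \<le> q u \<and> q u \<le> (1::real)" and q0: "q 0 = 1"
    and ws: "ws \<in> lens n n"
  shows "\<exists>ws'\<in>lens n (n - 1). sum_list ws' mod n = sum_list ws mod n \<and> prod_list (map q ws) \<le> prod_list (map q ws')"
proof -
  have wsl: "length ws = n" and wss: "set ws \<subseteq> {..<n}" using ws by (auto simp: lens_def)
  define p where "p a = sum_list (take a ws) mod n" for a
  have "\<not> inj_on p {0..n}"
  proof
    assume inj: "inj_on p {0..n}"
    have "card {0..n} \<le> card {..<n}"
      by (rule card_inj_on_le[OF inj]) (use n in \<open>auto simp: p_def\<close>)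
    then show False by simp
  qed
  then obtain a0 b0 where ab0: "a0 \<le> n" "b0 \<le> n" "a0 \<noteq> b0" "p a0 = p b0"
    unfolding inj_on_def by auto
  obtain a b where ab: "a < b" "b \<le> n" "p a = p b"
    using ab0 by (cases "a0 < b0") (auto intro: that[of a0 b0] that[of b0 a0])
  define ws' where "ws' = take a ws @ drop b ws @ replicate (b - a - 1) 0"
  have len: "length ws' = n - 1" using ab wsl by (simp add: ws'_def)
  have set': "set ws' \<subseteq> {..<n}" using wss n
    by (auto simp: ws'_def dest: in_set_takeD in_set_dropD)
  have sw: "sum_list ws = sum_list (take b ws) + sum_list (drop b ws)"
    by (metis append_take_drop_id sum_list_append)
  have "sum_list ws mod n = (p b + sum_list (drop b ws)) mod n"
    unfolding sw p_def by (simp add: mod_add_left_eq)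
  also have "\<dots> = (p a + sum_list (drop b ws)) mod n" using ab by simp
  also have "\<dots> = sum_list ws' mod n"
  proof -
    have "sum_list ws' = sum_list (take a ws) + sum_list (drop b ws)" by (simp add: ws'_def sr0)
    then show ?thesis unfolding p_def by (simp add: mod_add_left_eq)
  qed
  finally have sum': "sum_list ws' mod n = sum_list ws mod n" by simp
  have tb: "take b ws = take a ws @ drop a (take b ws)"
    using ab by (metis append_take_drop_id min.strict_order_iff take_take)
  have qs: "\<forall>u\<in>set ws. 0 \<le> q u \<and> q u \<le> 1" using wss q by auto
  let ?Pa = "prod_list (map q (take a ws))" and ?Pk = "prod_list (map q (drop a (take b ws)))"
    and ?Pb = "prod_list (map q (drop b ws))"
  have pw: "prod_list (map q ws) = ?Pa * ?Pk * ?Pb"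
    by (metis append_take_drop_id map_append prod_list.append tb)
  have pw': "prod_list (map q ws') = ?Pa * ?Pb"
    by (simp add: ws'_def q0)
  have pk1: "?Pk \<le> 1" using qs by (intro prod_list_le1) (auto dest: in_set_takeD in_set_dropD)
  have pab: "0 \<le> ?Pa * ?Pb" using qs
    by (intro mult_nonneg_nonneg prod_list_nonneg_q) (auto dest: in_set_takeD in_set_dropD)
  have "?Pa * ?Pk * ?Pb \<le> ?Pa * ?Pb"
  proof -
    have e: "?Pa * ?Pk * ?Pb = (?Pa * ?Pb) * ?Pk" by (simp add: ac_simps)
    show ?thesis unfolding e by (rule mult_left_le[OF pk1 pab])
  qed
  then show ?thesis using len set' sum' pw pw' by (intro bexI[of _ ws']) (auto simp: lens_def)
qed

lemma Wv_nonneg: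
  assumes n: "0 < n" and q: "\<forall>u<n. 0 \<le> q u" and y: "nonneg_vec n y"
  shows "0 \<le> Wv n q s y j"
proof -
  have "0 \<le> prod_list (map q (replicate s 0)) * y ((j + sum_list (replicate s (0::nat))) mod n)"
    using n q y by (intro mult_nonneg_nonneg prod_list_nonneg_q) (auto simp: nonneg_vec_def)
  also have "\<dots> \<le> Wv n q s y j" by (intro Wv_ge replicate_in_lens n)
  finally show ?thesis .
qed

locale nq =
  fixes n :: nat and q :: "nat \<Rightarrow> real"
  assumes n: "0 < n" and q: "\<forall>u<n. 0 \<le> q u \<and> q u \<le> 1" and q0: "q 0 = 1"
begin

lemma q_nonneg: "\<forall>u<n. 0 \<le> q u" using q by auto

lemma Wv_mono_s: "j < n \<Longrightarrow> Wv n q s y j \<le> Wv n q (Suc s) y j"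
proof -
  assume j: "j < n"
  have "Wv n q s y j = q 0 * Wv n q s y ((j + 0) mod n)" using j q0 by simp
  also have "\<dots> \<le> (MAX u\<in>{..<n}. q u * Wv n q s y ((j + u) mod n))" using n by (intro Max_lessThan_ge)
  also have "\<dots> = Wv n q (Suc s) y j" using Wv_Suc[OF n q_nonneg] by simp
  finally show ?thesis .
qed

lemma Wv_stab1: "nonneg_vec n y \<Longrightarrow> Wv n q n y j \<le> Wv n q (n - 1) y j"
proof (rule Wv_le[OF n])
  fix ws assume y: "nonneg_vec n y" and ws: "ws \<in> lens n n"
  obtain ws' where ws': "ws' \<in> lens n (n - 1)" "sum_list ws' mod n = sum_list ws mod n"
      "prod_list (map q ws) \<le> prod_list (map q ws')"
    using pigeon[OF n q q0 ws] by blast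
  have idx: "(j + sum_list ws) mod n = (j + sum_list ws') mod n"
    using ws'(2) by (metis mod_add_right_eq)
  have "prod_list (map q ws) * y ((j + sum_list ws) mod n) \<le> prod_list (map q ws') * y ((j + sum_list ws') mod n)"
    unfolding idx using y n ws'(3) by (intro mult_right_mono) (auto simp: nonneg_vec_def)
  also have "\<dots> \<le> Wv n q (n - 1) y j" using ws' by (intro Wv_ge)
  finally show "prod_list (map q ws) * y ((j + sum_list ws) mod n) \<le> Wv n q (n - 1) y j" .
qed

lemma Wv_Suc_cong: "(\<forall>j<n. Wv n q s y j = Wv n q s' y j) \<Longrightarrow> Wv n q (Suc s) y j = Wv n q (Suc s') y j"
  using n by (simp add: Wv_Suc[OF n q_nonneg])

lemma Wv_stab: "nonneg_vec n y \<Longrightarrow> n - 1 \<le> s \<Longrightarrow> j < n \<Longrightarrow> Wv n q s y j = Wv n q (n - 1) y j"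
proof -
  assume y: "nonneg_vec n y" and s: "n - 1 \<le> s" and j: "j < n"
  have base: "\<forall>j<n. Wv n q (Suc (n - 1)) y j = Wv n q (n - 1) y j"
  proof (intro allI impI)
    fix j assume j: "j < n"
    have e: "Suc (n - 1) = n" using n by simp
    show "Wv n q (Suc (n - 1)) y j = Wv n q (n - 1) y j"
      using Wv_stab1[OF y, of j] Wv_mono_s[OF j, of "n - 1" y] unfolding e by simp
  qed
  have "\<forall>j<n. Wv n q (n - 1 + d) y j = Wv n q (n - 1) y j" for d
  proof (induction d)
    case 0 then show ?case by simp
  next
    case (Suc d)
    then have "\<forall>j<n. Wv n q (Suc (n - 1 + d)) y j = Wv n q (Suc (n - 1)) y j"
      by (intro allI impI Wv_Suc_cong) simp
    then show ?case using base by simp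
  qed
  from this[of "s - (n - 1)"] s j show ?thesis by simp
qed

end



lemma Max_mult_const:
  assumes "finite A" "A \<noteq> {}" "0 \<le> (c::real)"
  shows "(MAX u\<in>A. c * f u) = c * (MAX u\<in>A. f u)"
proof -
  have "mono ((*) c)" using assms(3) by (auto simp: mono_def mult_left_mono)
  from mono_Max_commute[OF this, of "f ` A"] assms(1,2)
  show ?thesis by (simp add: image_image)
qed

definition qn :: "nat \<Rightarrow> (nat \<Rightarrow> real) \<Rightarrow> nat \<Rightarrow> nat \<Rightarrow> real" where
  "qn n a m0 u = a ((u + m0) mod n) / a m0"

locale circ =
  fixes n :: nat and a :: "nat \<Rightarrow> real" and m0 :: nat
  assumes n: "0 < n" and a: "\<forall>t<n. 0 \<le> a t" and m0: "m0 < n" and pos: "0 < a m0"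
    and amax: "\<forall>t<n. a t \<le> a m0"
begin

abbreviation "L \<equiv> a m0"
abbreviation "q \<equiv> qn n a m0"

lemma nq: "nq n q"
  unfolding nq_def qn_def using n a pos amax m0 by (auto simp: divide_le_eq_1)

lemma q_nonneg: "\<forall>u<n. 0 \<le> q u" using nq by (auto simp: nq_def)

lemma a_eq: "u < n \<Longrightarrow> a ((u + m0) mod n) = L * q u"
  using pos by (simp add: qn_def)

lemma Wv_norm: "i < n \<Longrightarrow> Wv n a s x i = L ^ s * Wv n q s x ((i + s * m0) mod n)"
proof (induction s arbitrary: i)
  case 0 then show ?case by (simp add: Wv_0)
next
  case (Suc s)
  let ?j = "(i + Suc s * m0) mod n"
  have "Wv n a (Suc s) x i = (MAX t\<in>{..<n}. a t * Wv n a s x ((i + t) mod n))"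
    using Wv_Suc[OF n a] .
  also have "\<dots> = (MAX t\<in>{..<n}. a t * (L ^ s * Wv n q s x (((i + t) mod n + s * m0) mod n)))"
    using n by (intro arg_cong[where f=Max] image_cong refl) (simp add: Suc.IH)
  also have "\<dots> = (MAX t\<in>(\<lambda>u. (u + m0) mod n) ` {..<n}. a t * (L ^ s * Wv n q s x (((i + t) mod n + s * m0) mod n)))"
    using surj_mod_shift[OF n] by simp
  also have "\<dots> = (MAX u\<in>{..<n}. L ^ Suc s * (q u * Wv n q s x ((?j + u) mod n)))"
    unfolding image_image
  proof (intro arg_cong[where f=Max] image_cong refl)
    fix u assume "u \<in> {..<n}"
    then have u: "u < n" by simp
    have "((i + (u + m0) mod n) mod n + s * m0) mod n = (i + (u + m0) + s * m0) mod n"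
      by (simp only: mod_add_left_eq mod_add_right_eq)
    also have "\<dots> = (i + Suc s * m0 + u) mod n" by (simp add: algebra_simps)
    also have "\<dots> = (?j + u) mod n" by (simp only: mod_add_left_eq)
    finally have idx: "((i + (u + m0) mod n) mod n + s * m0) mod n = (?j + u) mod n" .
    show "a ((u + m0) mod n) * (L ^ s * Wv n q s x (((i + (u + m0) mod n) mod n + s * m0) mod n))
        = L ^ Suc s * (q u * Wv n q s x ((?j + u) mod n))"
      unfolding idx a_eq[OF u] by (simp add: algebra_simps)
  qed
  also have "\<dots> = L ^ Suc s * (MAX u\<in>{..<n}. q u * Wv n q s x ((?j + u) mod n))"
    using n pos by (intro Max_mult_const) auto
  also have "\<dots> = L ^ Suc s * Wv n q (Suc s) x ?j"
    using Wv_Suc[OF n q_nonneg] by simp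
  finally show ?case .
qed

definition E :: "(nat \<Rightarrow> real) \<Rightarrow> nat \<Rightarrow> bool" where
  "E x s \<longleftrightarrow> (\<forall>j<n. Wv n q (Suc s) x ((j + m0) mod n) = Wv n q s x j)"

definition Eq :: "(nat \<Rightarrow> real) \<Rightarrow> nat \<Rightarrow> bool" where
  "Eq x s \<longleftrightarrow> (\<forall>i<n. Wv n a (Suc s) x i = L * Wv n a s x i)"

lemma Eq_E: "Eq x s \<longleftrightarrow> E x s"
proof -
  have "Eq x s \<longleftrightarrow> (\<forall>i<n. Wv n q (Suc s) x ((((i + s * m0) mod n) + m0) mod n) = Wv n q s x ((i + s * m0) mod n))"
  proof -
    have "Wv n a (Suc s) x i = L * Wv n a s x i \<longleftrightarrow>
        Wv n q (Suc s) x ((((i + s * m0) mod n) + m0) mod n) = Wv n q s x ((i + s * m0) mod n)"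
      if i: "i < n" for i
    proof -
      have "(((i + s * m0) mod n) + m0) mod n = (i + s * m0 + m0) mod n"
        by (simp only: mod_add_left_eq)
      then have idx: "(i + Suc s * m0) mod n = (((i + s * m0) mod n) + m0) mod n"
        by (simp add: algebra_simps)
      have p: "0 < L ^ Suc s" using pos by simp
      show ?thesis unfolding Wv_norm[OF i] idx using p pos by simp
    qed
    then show ?thesis unfolding Eq_def by auto
  qed
  also have "\<dots> \<longleftrightarrow> (\<forall>j\<in>(\<lambda>i. (i + s * m0) mod n) ` {..<n}. Wv n q (Suc s) x ((j + m0) mod n) = Wv n q s x j)"
    by auto
  also have "\<dots> \<longleftrightarrow> E x s" unfolding surj_mod_shift[OF n] E_def by auto
  finally show ?thesis .
qed

lemma E_Suc: "E x s \<Longrightarrow> E x (Suc s)"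
  unfolding E_def
proof (intro allI impI)
  fix j assume E: "\<forall>j<n. Wv n q (Suc s) x ((j + m0) mod n) = Wv n q s x j" and j: "j < n"
  have "Wv n q (Suc (Suc s)) x ((j + m0) mod n) = (MAX u\<in>{..<n}. q u * Wv n q (Suc s) x (((j + m0) mod n + u) mod n))"
    using Wv_Suc[OF n q_nonneg] by simp
  also have "\<dots> = (MAX u\<in>{..<n}. q u * Wv n q s x ((j + u) mod n))"
  proof (intro arg_cong[where f=Max] image_cong refl)
    fix u assume "u \<in> {..<n}"
    have "((j + m0) mod n + u) mod n = (j + m0 + u) mod n" by (simp only: mod_add_left_eq)
    moreover have "(((j + u) mod n) + m0) mod n = (j + u + m0) mod n" by (simp only: mod_add_left_eq)
    ultimately have idx: "((j + m0) mod n + u) mod n = (((j + u) mod n) + m0) mod n"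
      by (simp add: ac_simps)
    show "q u * Wv n q (Suc s) x (((j + m0) mod n + u) mod n) = q u * Wv n q s x ((j + u) mod n)"
      unfolding idx using E n by simp
  qed
  also have "\<dots> = Wv n q (Suc s) x j" using Wv_Suc[OF n q_nonneg] by simp
  finally show "Wv n q (Suc (Suc s)) x ((j + m0) mod n) = Wv n q (Suc s) x j" .
qed

lemma E_mono: "E x s \<Longrightarrow> s \<le> s' \<Longrightarrow> E x s'"
proof -
  assume E: "E x s"
  have "E x (s + d)" for d by (induction d) (use E E_Suc in auto)
  then show "s \<le> s' \<Longrightarrow> E x s'" by (metis le_add_diff_inverse)
qed

definition Per :: "(nat \<Rightarrow> real) \<Rightarrow> bool" where
  "Per x \<longleftrightarrow> (\<forall>j<n. Wv n q (n - 1) x ((j + m0) mod n) = Wv n q (n - 1) x j)"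

lemma E_Per: "nonneg_vec n x \<Longrightarrow> n - 1 \<le> s \<Longrightarrow> E x s \<longleftrightarrow> Per x"
proof -
  assume x: "nonneg_vec n x" and s: "n - 1 \<le> s"
  have "Wv n q (Suc s) x ((j + m0) mod n) = Wv n q (n - 1) x ((j + m0) mod n)" for j
    using nq.Wv_stab[OF nq x, of "Suc s" "(j + m0) mod n"] s n by simp
  moreover have "j < n \<Longrightarrow> Wv n q s x j = Wv n q (n - 1) x j" for j
    using nq.Wv_stab[OF nq x s] by simp
  ultimately show ?thesis unfolding E_def Per_def by auto
qed

lemma Attr_iff_Per:
  assumes x: "nonneg_vec n x"
  shows "x \<in> Attr n (Circ n a) \<longleftrightarrow> Per x"
proof -
  have lam: "mx_lambda n (Circ n a) = L"
  proof -
    have "(MAX t\<in>{..<n}. a t) = L"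
      using n m0 amax by (intro Max_eqI) auto
    then show ?thesis using lambda_Circ[OF n a] by simp
  qed
  have "x \<in> Attr n (Circ n a) \<longleftrightarrow> (\<exists>t. Eq x t)"
    unfolding Attr_def Eq_def vec_eq_def lam using x
    by (simp del: mx_pow.simps add: pow_Circ_Wv[OF n a x])
  also have "\<dots> \<longleftrightarrow> (\<exists>t. E x t)" by (simp add: Eq_E)
  also have "\<dots> \<longleftrightarrow> Per x"
  proof
    assume "\<exists>t. E x t"
    then obtain t where "E x t" by blast
    then have "E x (max t (n - 1))" by (rule E_mono) simp
    then show "Per x" using E_Per[OF x] by simp
  next
    assume "Per x"
    then show "\<exists>t. E x t" using E_Per[OF x, of "n - 1"] by blast
  qed
  finally show ?thesis .
qed

lemma Eq_iff_Per:
  assumes x: "nonneg_vec n x" and N: "n - 1 \<le> N"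
  shows "vec_eq n (mx_vec n (mx_pow n (Circ n a) (Suc N)) x) (\<lambda>i. mx_lambda n (Circ n a) * mx_vec n (mx_pow n (Circ n a) N) x i)
     \<longleftrightarrow> Per x"
proof -
  have lam: "mx_lambda n (Circ n a) = L"
  proof -
    have "(MAX t\<in>{..<n}. a t) = L"
      using n m0 amax by (intro Max_eqI) auto
    then show ?thesis using lambda_Circ[OF n a] by simp
  qed
  have "vec_eq n (mx_vec n (mx_pow n (Circ n a) (Suc N)) x) (\<lambda>i. mx_lambda n (Circ n a) * mx_vec n (mx_pow n (Circ n a) N) x i)
     \<longleftrightarrow> Eq x N"
    unfolding Eq_def vec_eq_def lam using x by (simp del: mx_pow.simps add: pow_Circ_Wv[OF n a x])
  also have "\<dots> \<longleftrightarrow> Per x" using Eq_E E_Per[OF x N] by simp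
  finally show ?thesis .
qed

end



lemma Wv_cong_y: "0 < n \<Longrightarrow> (\<forall>k<n. y k = y' k) \<Longrightarrow> Wv n q s y j = Wv n q s y' j"
  unfolding Wv_def by (intro arg_cong[where f=Max] image_cong refl) simp

lemma Wv_shift: "Wv n q s y ((j + m) mod n) = Wv n q s (\<lambda>k. y ((k + m) mod n)) j"
  unfolding Wv_def
proof (intro arg_cong[where f=Max] image_cong refl)
  fix ws
  have "((j + m) mod n + sum_list ws) mod n = (j + m + sum_list ws) mod n" by (simp only: mod_add_left_eq)
  moreover have "((j + sum_list ws) mod n + m) mod n = (j + sum_list ws + m) mod n" by (simp only: mod_add_left_eq)
  ultimately have "((j + m) mod n + sum_list ws) mod n = ((j + sum_list ws) mod n + m) mod n"
    by (simp add: ac_simps)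
  then show "prod_list (map q ws) * y (((j + m) mod n + sum_list ws) mod n) =
         prod_list (map q ws) * y (((j + sum_list ws) mod n + m) mod n)" by simp
qed

lemma Wv_mono_y:
  assumes n: "0 < n" and q: "\<forall>u<n. 0 \<le> q u" and y: "\<forall>k<n. y k \<le> y' k"
  shows "Wv n q s y j \<le> Wv n q s y' j"
proof (rule Wv_le[OF n])
  fix ws assume ws: "ws \<in> lens n s"
  then have "0 \<le> prod_list (map q ws)" using q by (intro prod_list_nonneg_q) (auto simp: lens_def)
  then have "prod_list (map q ws) * y ((j + sum_list ws) mod n) \<le> prod_list (map q ws) * y' ((j + sum_list ws) mod n)"
    using y n by (intro mult_left_mono) auto
  also have "\<dots> \<le> Wv n q s y' j" using ws by (rule Wv_ge)
  finally show "prod_list (map q ws) * y ((j + sum_list ws) mod n) \<le> Wv n q s y' j" .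
qed

lemma (in nq) Wv_mono_s': "j < n \<Longrightarrow> s \<le> s' \<Longrightarrow> Wv n q s y j \<le> Wv n q s' y j"
proof -
  assume j: "j < n"
  have "Wv n q s y j \<le> Wv n q (s + d) y j" for d
    by (induction d) (auto intro: order_trans Wv_mono_s[OF j])
  then show "s \<le> s' \<Longrightarrow> Wv n q s y j \<le> Wv n q s' y j" by (metis le_add_diff_inverse)
qed

lemma Attr_mono:
  assumes ca: "circ n a m0" and cb: "circ n b m0"
    and le: "\<forall>t<n. b t / b m0 \<le> a t / a m0"
    and x: "nonneg_vec n x" and xb: "x \<in> Attr n (Circ n b)"
  shows "x \<in> Attr n (Circ n a)"
proof -
  interpret A: circ n a m0 by (rule ca)
  interpret B: circ n b m0 by (rule cb)
  let ?qa = "qn n a m0" and ?qb = "qn n b m0"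
  have n: "0 < n" by (rule A.n)
  have nqa: "nq n ?qa" by (rule A.nq)
  have nqb: "nq n ?qb" by (rule B.nq)
  have qle: "\<forall>u<n. 0 \<le> ?qb u \<and> ?qb u \<le> ?qa u"
    using le B.q_nonneg n unfolding qn_def by auto
  have perb: "B.Per x" using B.Attr_iff_Per[OF x] xb by simp
  define zb where "zb = Wv n ?qb (n - 1) x"
  have zb_nn: "nonneg_vec n zb" unfolding zb_def nonneg_vec_def
    using Wv_nonneg[OF n B.q_nonneg x] by simp
  have xz: "\<forall>k<n. x k \<le> zb k"
  proof (intro allI impI)
    fix k assume k: "k < n"
    have "x k = Wv n ?qb 0 x k" using k by (simp add: Wv_0)
    also have "\<dots> \<le> zb k" unfolding zb_def by (rule nq.Wv_mono_s'[OF nqb k]) simp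
    finally show "x k \<le> zb k" .
  qed
  have C: "Wv n ?qa (n - 1) x j = Wv n ?qa (n - 1) zb j" if j: "j < n" for j
  proof (rule antisym)
    show "Wv n ?qa (n - 1) x j \<le> Wv n ?qa (n - 1) zb j"
      by (rule Wv_mono_y[OF n A.q_nonneg xz])
    show "Wv n ?qa (n - 1) zb j \<le> Wv n ?qa (n - 1) x j"
    proof (rule Wv_le[OF n])
      fix ws1 assume ws1: "ws1 \<in> lens n (n - 1)"
      let ?k = "(j + sum_list ws1) mod n"
      obtain ws2 where ws2: "ws2 \<in> lens n (n - 1)" "zb ?k = prod_list (map ?qb ws2) * x ((?k + sum_list ws2) mod n)"
        using Wv_obtain[OF n] unfolding zb_def by blast
      have p1: "0 \<le> prod_list (map ?qa ws1)"
        using ws1 A.q_nonneg by (intro prod_list_nonneg_q) (auto simp: lens_def)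
      have p2: "prod_list (map ?qb ws2) \<le> prod_list (map ?qa ws2)"
        using ws2 qle by (intro prod_list_mono_q) (auto simp: lens_def)
      have xnn: "0 \<le> x ((?k + sum_list ws2) mod n)" using x n by (simp add: nonneg_vec_def)
      have idx: "(?k + sum_list ws2) mod n = (j + sum_list (ws1 @ ws2)) mod n"
        by (simp add: mod_add_left_eq add.assoc)
      have "prod_list (map ?qa ws1) * zb ?k \<le> prod_list (map ?qa ws1) * (prod_list (map ?qa ws2) * x ((?k + sum_list ws2) mod n))"
        unfolding ws2(2) using p1 p2 xnn by (intro mult_left_mono mult_right_mono) auto
      also have "\<dots> = prod_list (map ?qa (ws1 @ ws2)) * x ((j + sum_list (ws1 @ ws2)) mod n)"
        unfolding idx by simp
      also have "\<dots> \<le> Wv n ?qa (n - 1 + (n - 1)) x j"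
        using ws1 ws2 by (intro Wv_ge) (auto simp: lens_def)
      also have "\<dots> = Wv n ?qa (n - 1) x j"
        by (rule nq.Wv_stab[OF nqa x _ j]) simp
      finally show "prod_list (map ?qa ws1) * zb ((j + sum_list ws1) mod n) \<le> Wv n ?qa (n - 1) x j" .
    qed
  qed
  have "A.Per x" unfolding A.Per_def
  proof (intro allI impI)
    fix j assume j: "j < n"
    have jm: "(j + m0) mod n < n" using n by simp
    have "Wv n ?qa (n - 1) x ((j + m0) mod n) = Wv n ?qa (n - 1) zb ((j + m0) mod n)" by (rule C[OF jm])
    also have "\<dots> = Wv n ?qa (n - 1) (\<lambda>k. zb ((k + m0) mod n)) j" by (rule Wv_shift)
    also have "\<dots> = Wv n ?qa (n - 1) zb j"
      using perb unfolding B.Per_def zb_def by (intro Wv_cong_y[OF n]) simp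
    also have "\<dots> = Wv n ?qa (n - 1) x j" using C[OF j] by simp
    finally show "Wv n ?qa (n - 1) x ((j + m0) mod n) = Wv n ?qa (n - 1) x j" .
  qed
  then show ?thesis using A.Attr_iff_Per[OF x] by simp
qed

lemma CHAR:
  assumes n: "0 < n" and a: "\<forall>t<n. 0 \<le> a t" and x: "nonneg_vec n x" and N: "n - 1 \<le> N"
  shows "x \<in> Attr n (Circ n a) \<longleftrightarrow>
    vec_eq n (mx_vec n (mx_pow n (Circ n a) (Suc N)) x) (\<lambda>i. mx_lambda n (Circ n a) * mx_vec n (mx_pow n (Circ n a) N) x i)"
proof -
  obtain m0 where m0: "m0 < n" "(MAX t\<in>{..<n}. a t) = a m0" using Max_lessThan_obtain[OF n, of a] by blast
  have amax: "\<forall>t<n. a t \<le> a m0" using m0 Max_lessThan_ge[of _ n a] by metis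
  show ?thesis
  proof (cases "0 < a m0")
    case True
    then have c: "circ n a m0" using n a m0 amax by (unfold_locales) auto
    show ?thesis using circ.Attr_iff_Per[OF c x] circ.Eq_iff_Per[OF c x N] by simp
  next
    case False
    then have z: "\<forall>t<n. a t = 0" using amax a m0 by (meson antisym not_less order_trans)
    have lam: "mx_lambda n (Circ n a) = 0" using lambda_Circ[OF n a] m0 False a by (simp add: antisym)
    have W0: "Wv n a (Suc s) x i = 0" for s i
    proof -
      have im: "(\<lambda>u. 0::real) ` {..<n} = {0}" using n by auto
      have "Wv n a (Suc s) x i = (MAX u\<in>{..<n}. a u * Wv n a s x ((i + u) mod n))" using Wv_Suc[OF n a] .
      also have "\<dots> = (MAX u\<in>{..<n}. 0)" using z by (intro arg_cong[where f=Max] image_cong refl) simp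
      also have "\<dots> = 0" unfolding im by simp
      finally show ?thesis .
    qed
    have eq: "vec_eq n (mx_vec n (mx_pow n (Circ n a) (Suc s)) x) (\<lambda>i. mx_lambda n (Circ n a) * mx_vec n (mx_pow n (Circ n a) s) x i)" for s
      unfolding vec_eq_def lam using W0 pow_Circ_Wv[OF n a x] by (simp del: mx_pow.simps)
    show ?thesis using eq x unfolding Attr_def by blast
  qed
qed



lemma tendsto_Max_fin:
  assumes "finite K" "K \<noteq> {}" "\<forall>k\<in>K. ((\<lambda>m. f m k) \<longlongrightarrow> (g k :: real)) F"
  shows "((\<lambda>m. MAX k\<in>K. f m k) \<longlongrightarrow> (MAX k\<in>K. g k)) F"
  using assms
proof (induction K rule: finite_ne_induct)
  case (singleton x) then show ?case by simp
next
  case (insert x K)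
  have "((\<lambda>m. max (f m x) (MAX k\<in>K. f m k)) \<longlongrightarrow> max (g x) (MAX k\<in>K. g k)) F"
    using insert by (intro tendsto_max) auto
  then show ?case using insert by simp
qed

lemma tendsto_prod_list:
  "(\<forall>u\<in>set ws. (\<lambda>m. q m u) \<longlonglongrightarrow> (c u :: real)) \<Longrightarrow> (\<lambda>m. prod_list (map (q m) ws)) \<longlonglongrightarrow> prod_list (map c ws)"
  by (induction ws) (auto intro: tendsto_mult)

lemma tendsto_Wv:
  assumes n: "0 < n" and q: "\<forall>u<n. (\<lambda>m. q m u) \<longlonglongrightarrow> c u" and y: "\<forall>k<n. (\<lambda>m. y m k) \<longlonglongrightarrow> z k"
  shows "(\<lambda>m. Wv n (q m) s (y m) j) \<longlonglongrightarrow> Wv n c s z j"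
  unfolding Wv_def
proof (rule tendsto_Max_fin[OF lens_finite lens_ne[OF n]], intro ballI)
  fix ws assume ws: "ws \<in> lens n s"
  have "(\<lambda>m. prod_list (map (q m) ws)) \<longlonglongrightarrow> prod_list (map c ws)"
    using ws q by (intro tendsto_prod_list) (auto simp: lens_def)
  moreover have "(\<lambda>m. y m ((j + sum_list ws) mod n)) \<longlonglongrightarrow> z ((j + sum_list ws) mod n)"
    using y n by simp
  ultimately show "(\<lambda>m. prod_list (map (q m) ws) * y m ((j + sum_list ws) mod n)) \<longlonglongrightarrow>
      prod_list (map c ws) * z ((j + sum_list ws) mod n)" by (rule tendsto_mult)
qed

lemma bolzano_vec:
  fixes x :: "nat \<Rightarrow> nat \<Rightarrow> real"
  shows "(\<forall>m i. i < n \<longrightarrow> lo i \<le> x m i \<and> x m i \<le> hi i) \<Longrightarrow> \<exists>r. strict_mono r \<and> (\<forall>i<n. convergent (\<lambda>j. x (r j) i))"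
proof (induction n)
  case 0
  then show ?case by (intro exI[of _ id]) (auto simp: strict_mono_def)
next
  case (Suc n)
  then obtain r where r: "strict_mono r" "\<forall>i<n. convergent (\<lambda>j. x (r j) i)" by auto
  obtain f where f: "strict_mono f" "monoseq (\<lambda>j. x (r (f j)) n)"
    using seq_monosub[of "\<lambda>j. x (r j) n"] by blast
  have "Bseq (\<lambda>j. x (r (f j)) n)"
  proof (rule BseqI')
    fix j
    have "lo n \<le> x (r (f j)) n \<and> x (r (f j)) n \<le> hi n" using Suc.prems by simp
    then show "norm (x (r (f j)) n) \<le> max \<bar>lo n\<bar> \<bar>hi n\<bar>" by auto
  qed
  then have cn: "convergent (\<lambda>j. x (r (f j)) n)" using f(2) by (rule Bseq_monoseq_convergent)
  have "\<forall>i<n. convergent (\<lambda>j. x (r (f j)) i)"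
    using r(2) f(1) convergent_subseq_convergent[of _ f] by (auto simp: o_def)
  then have "\<forall>i<Suc n. convergent (\<lambda>j. x (r (f j)) i)" using cn by (auto simp: less_Suc_eq)
  moreover have "strict_mono (r \<circ> f)" using r(1) f(1) by (rule strict_mono_o)
  ultimately show ?case by (intro exI[of _ "r \<circ> f"]) (simp add: o_def)
qed

lemma ival_comb:
  assumes c: "lo \<le> c" "c \<le> hi" and p: "p \<in> ival lo hi lc rc" and th: "0 < th" "th \<le> (1::real)"
  shows "(1 - th) * c + th * p \<in> ival lo hi lc rc"
proof -
  have e1: "(1 - th) * c + th * p - lo = (1 - th) * (c - lo) + th * (p - lo)" by (simp add: algebra_simps)
  have e2: "hi - ((1 - th) * c + th * p) = (1 - th) * (hi - c) + th * (hi - p)" by (simp add: algebra_simps)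
  have h1: "0 \<le> (1 - th) * (c - lo)" "0 \<le> (1 - th) * (hi - c)" using c th by auto
  have l: "(if lc then lo \<le> p else lo < p)" and r: "(if rc then p \<le> hi else p < hi)"
    using p by (auto simp: ival_def)
  have "if lc then lo \<le> (1 - th) * c + th * p else lo < (1 - th) * c + th * p"
  proof (cases lc)
    case True
    then have "0 \<le> th * (p - lo)" using l th by simp
    then show ?thesis using True e1 h1 by simp
  next
    case False
    then have "0 < th * (p - lo)" using l th by simp
    then show ?thesis using False e1 h1 by simp
  qed
  moreover have "if rc then (1 - th) * c + th * p \<le> hi else (1 - th) * c + th * p < hi"
  proof (cases rc)
    case True
    then have "0 \<le> th * (hi - p)" using r th by simp
    then show ?thesis using True e2 h1 by simp
  next
    case False
    then have "0 < th * (hi - p)" using r th by simp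
    then show ?thesis using False e2 h1 by simp
  qed
  ultimately show ?thesis by (simp add: ival_def)
qed

lemma Attr_zero:
  assumes n: "0 < n" and z: "\<forall>t<n. a t = 0" and x: "nonneg_vec n x"
  shows "x \<in> Attr n (Circ n a)"
proof -
  have a: "\<forall>t<n. 0 \<le> a t" using z by simp
  have CH: "x \<in> Attr n (Circ n a) \<longleftrightarrow>
    vec_eq n (mx_vec n (mx_pow n (Circ n a) (Suc n)) x) (\<lambda>i. mx_lambda n (Circ n a) * mx_vec n (mx_pow n (Circ n a) n) x i)"
    by (rule CHAR[OF n a x]) simp
  have im: "(\<lambda>u. 0::real) ` {..<n} = {0}" using n by auto
  have lam: "mx_lambda n (Circ n a) = 0"
    using lambda_Circ[OF n a] z by (simp add: im)
  have W0: "Wv n a (Suc s) x i = 0" for s i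
  proof -
    have "Wv n a (Suc s) x i = (MAX u\<in>{..<n}. a u * Wv n a s x ((i + u) mod n))" using Wv_Suc[OF n a] .
    also have "\<dots> = (MAX u\<in>{..<n}. 0)" using z by (intro arg_cong[where f=Max] image_cong refl) simp
    also have "\<dots> = 0" unfolding im by simp
    finally show ?thesis .
  qed
  show ?thesis unfolding CH vec_eq_def lam using W0 pow_Circ_Wv[OF n a x] by (simp del: mx_pow.simps)
qed



lemma ival_bounds: "x \<in> ival lo hi lc rc \<Longrightarrow> lo \<le> x \<and> x \<le> hi"
  by (auto simp: ival_def split: if_splits)

lemma ival_le: "ival lo hi lc rc \<noteq> {} \<Longrightarrow> lo \<le> hi"
  using ival_bounds by fastforce

lemma robust_imp:
  assumes n: "0 < n"
    and X: "\<forall>i<n. 0 \<le> xlo i \<and> xlo i \<le> xhi i"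
    and a_nonneg: "\<forall>t<n. 0 \<le> alo t"
    and a_nonempty: "\<forall>t<n. ival (alo t) (ahi t) (lc t) (rc t) \<noteq> {}"
    and R: "tol_robust n (IC n alo ahi lc rc) (box n xlo xhi)"
    and k: "k < n"
  shows "Attr n (Ak n alo ahi k) \<inter> box n xlo xhi \<noteq> {}"
proof -
  define c where "c t = (if t = k then ahi t else alo t)" for t
  have Akc: "Ak n alo ahi k = Circ n c" unfolding Ak_def c_def by (rule refl)
  have ord: "\<forall>t<n. alo t \<le> ahi t" using a_nonempty ival_le by blast
  have c_b: "\<forall>t<n. alo t \<le> c t \<and> c t \<le> ahi t" using ord by (auto simp: c_def)
  have c_nn: "\<forall>t<n. 0 \<le> c t"
  proof (intro allI impI)
    fix t assume "t < n" then show "0 \<le> c t" using c_b a_nonneg by force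
  qed
  define p where "p t = (SOME v. v \<in> ival (alo t) (ahi t) (lc t) (rc t))" for t
  have p: "\<forall>t<n. p t \<in> ival (alo t) (ahi t) (lc t) (rc t)"
    unfolding p_def using a_nonempty by (auto intro: someI_ex simp: ex_in_conv[symmetric])
  define th where "th m = inverse (real (Suc m))" for m
  have th: "0 < th m" "th m \<le> 1" for m
    unfolding th_def by (auto simp: inverse_le_1_iff)
  define am where "am m t = (1 - th m) * c t + th m * p t" for m t
  have am_iv: "\<forall>t<n. am m t \<in> ival (alo t) (ahi t) (lc t) (rc t)" for m
    unfolding am_def using c_b p th by (auto intro: ival_comb)
  have am_nn: "\<forall>t<n. 0 \<le> am m t" for m
  proof (intro allI impI)
    fix t assume t: "t < n"
    then have "alo t \<le> am m t" using am_iv ival_bounds by blast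
    then show "0 \<le> am m t" using a_nonneg t by force
  qed
  have am_lim: "(\<lambda>m. am m t) \<longlonglongrightarrow> c t" for t
  proof -
    have "(\<lambda>m. (1 - th m) * c t + th m * p t) \<longlonglongrightarrow> (1 - 0) * c t + 0 * p t"
      unfolding th_def by (intro tendsto_intros LIMSEQ_inverse_real_of_nat)
    then show ?thesis by (simp add: am_def)
  qed
  have box_nn: "nonneg_vec n y" if "y \<in> box n xlo xhi" for y
    using that X unfolding box_def nonneg_vec_def by force
  have ex: "\<forall>m. \<exists>x. x \<in> box n xlo xhi \<and> x \<in> Attr n (Circ n (am m))"
  proof
    fix m
    have "Circ n (am m) \<in> IC n alo ahi lc rc" unfolding IC_def using am_iv by blast
    then show "\<exists>x. x \<in> box n xlo xhi \<and> x \<in> Attr n (Circ n (am m))"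
      using R unfolding tol_robust_def by blast
  qed
  then obtain x where x0: "\<forall>m. x m \<in> box n xlo xhi \<and> x m \<in> Attr n (Circ n (am m))"
    using choice[OF ex] by blast
  then have x: "\<And>m. x m \<in> box n xlo xhi" "\<And>m. x m \<in> Attr n (Circ n (am m))" by auto
  let ?N = "n ^ 2"
  have "n \<le> n * n" using n by simp
  then have N: "n - 1 \<le> ?N" unfolding power2_eq_square by linarith
  have eqm: "\<forall>i<n. Wv n (am m) (Suc ?N) (x m) i = (MAX t\<in>{..<n}. am m t) * Wv n (am m) ?N (x m) i" for m
  proof -
    have "vec_eq n (mx_vec n (mx_pow n (Circ n (am m)) (Suc ?N)) (x m))
        (\<lambda>i. mx_lambda n (Circ n (am m)) * mx_vec n (mx_pow n (Circ n (am m)) ?N) (x m) i)"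
      using CHAR[OF n am_nn box_nn[OF x(1)] N] x(2) by blast
    then show ?thesis unfolding vec_eq_def lambda_Circ[OF n am_nn]
      using pow_Circ_Wv[OF n am_nn box_nn[OF x(1)]] by (simp del: mx_pow.simps)
  qed
  have bnd: "\<forall>m i. i < n \<longrightarrow> xlo i \<le> x m i \<and> x m i \<le> xhi i" using x(1) by (auto simp: box_def)
  obtain r where r: "strict_mono r" "\<forall>i<n. convergent (\<lambda>j. x (r j) i)"
    using bolzano_vec[OF bnd] by blast
  define y where "y i = lim (\<lambda>j. x (r j) i)" for i
  have ylim: "\<forall>i<n. (\<lambda>j. x (r j) i) \<longlonglongrightarrow> y i"
    using r(2) by (auto simp: y_def convergent_LIMSEQ_iff)
  have ybox: "y \<in> box n xlo xhi"
    unfolding box_def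
  proof (intro CollectI allI impI conjI)
    fix i assume i: "i < n"
    show "xlo i \<le> y i" using ylim i bnd by (intro LIMSEQ_le_const[of "\<lambda>j. x (r j) i"]) auto
    show "y i \<le> xhi i" using ylim i bnd by (intro LIMSEQ_le_const2[of "\<lambda>j. x (r j) i"]) auto
  qed
  have amr: "\<forall>t<n. (\<lambda>j. am (r j) t) \<longlonglongrightarrow> c t"
    using LIMSEQ_subseq_LIMSEQ[OF am_lim r(1)] by (simp add: o_def)
  have eqy: "Wv n c (Suc ?N) y i = (MAX t\<in>{..<n}. c t) * Wv n c ?N y i" if i: "i < n" for i
  proof (rule LIMSEQ_unique)
    show "(\<lambda>j. Wv n (am (r j)) (Suc ?N) (x (r j)) i) \<longlonglongrightarrow> Wv n c (Suc ?N) y i"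
      by (rule tendsto_Wv[OF n amr ylim])
    have "(\<lambda>j. (MAX t\<in>{..<n}. am (r j) t) * Wv n (am (r j)) ?N (x (r j)) i) \<longlonglongrightarrow> (MAX t\<in>{..<n}. c t) * Wv n c ?N y i"
      using n amr by (intro tendsto_mult tendsto_Wv[OF n amr ylim] tendsto_Max_fin) auto
    then show "(\<lambda>j. Wv n (am (r j)) (Suc ?N) (x (r j)) i) \<longlonglongrightarrow> (MAX t\<in>{..<n}. c t) * Wv n c ?N y i"
      using eqm i by simp
  qed
  have "vec_eq n (mx_vec n (mx_pow n (Circ n c) (Suc ?N)) y)
        (\<lambda>i. mx_lambda n (Circ n c) * mx_vec n (mx_pow n (Circ n c) ?N) y i)"
    unfolding vec_eq_def lambda_Circ[OF n c_nn]
  proof (intro allI impI)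
    fix i assume i: "i < n"
    have e1: "mx_vec n (mx_pow n (Circ n c) (Suc ?N)) y i = Wv n c (Suc ?N) y i"
      by (rule pow_Circ_Wv[OF n c_nn box_nn[OF ybox] i])
    have e2: "mx_vec n (mx_pow n (Circ n c) ?N) y i = Wv n c ?N y i"
      by (rule pow_Circ_Wv[OF n c_nn box_nn[OF ybox] i])
    show "mx_vec n (mx_pow n (Circ n c) (Suc ?N)) y i = (MAX t\<in>{..<n}. c t) * mx_vec n (mx_pow n (Circ n c) ?N) y i"
      unfolding e1 e2 by (rule eqy[OF i])
  qed
  then have "y \<in> Attr n (Circ n c)" by (rule iffD2[OF CHAR[OF n c_nn box_nn[OF ybox] N]])
  then have "y \<in> Attr n (Ak n alo ahi k) \<inter> box n xlo xhi" unfolding Akc using ybox by (rule IntI)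
  then show ?thesis by (rule ex_in_conv[THEN iffD1, OF exI])
qed



theorem theorem4:
  fixes n :: nat and xlo xhi :: "nat \<Rightarrow> real"
    and alo ahi :: "nat \<Rightarrow> real" and lc rc :: "nat \<Rightarrow> bool"
  assumes "1 \<le> n"
    and X: "\<forall>i<n. 0 \<le> xlo i \<and> xlo i \<le> xhi i"
    and a_nonneg: "\<forall>t<n. 0 \<le> alo t"
    and a_nonempty: "\<forall>t<n. ival (alo t) (ahi t) (lc t) (rc t) \<noteq> {}"
  shows "(tol_robust n (IC n alo ahi lc rc) (box n xlo xhi) \<longleftrightarrow>
           (\<forall>k<n. Attr n (Ak n alo ahi k) \<inter> box n xlo xhi \<noteq> {}))
       \<and> (tol_robust n (IC n alo ahi lc rc) (box n xlo xhi) \<longleftrightarrow>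
           (\<forall>k<n. \<not> is_zero_mx n (Ak n alo ahi k) \<longrightarrow>
              (\<exists>y\<in>box n xlo xhi.
                 vec_eq n (\<lambda>i. mx_lambda n (Ak n alo ahi k) * mx_vec n (mx_pow n (Ak n alo ahi k) (n^2)) y i)
                          (mx_vec n (mx_pow n (Ak n alo ahi k) (n^2 + 1)) y))))"
proof -
  have n: "0 < n" using assms(1) by simp
  define bk where "bk k t = (if t = k then ahi t else alo t)" for k t
  have Ak: "Ak n alo ahi k = Circ n (bk k)" for k unfolding Ak_def bk_def by (rule refl)
  have ord: "\<forall>t<n. alo t \<le> ahi t" using a_nonempty ival_le by blast
  have bk_nn: "\<forall>t<n. 0 \<le> bk k t" for k
  proof (intro allI impI)
    fix t assume t: "t < n"
    then show "0 \<le> bk k t" using a_nonneg ord unfolding bk_def by force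
  qed
  have box_nn: "nonneg_vec n y" if "y \<in> box n xlo xhi" for y
    using that X unfolding box_def nonneg_vec_def by force
  have xlo_box: "xlo \<in> box n xlo xhi" using X by (simp add: box_def)
  have "n \<le> n * n" using n by simp
  then have N: "n - 1 \<le> n ^ 2" unfolding power2_eq_square by linarith
  let ?Q1 = "\<forall>k<n. Attr n (Ak n alo ahi k) \<inter> box n xlo xhi \<noteq> {}"
  let ?Q2 = "\<forall>k<n. \<not> is_zero_mx n (Ak n alo ahi k) \<longrightarrow>
              (\<exists>y\<in>box n xlo xhi.
                 vec_eq n (\<lambda>i. mx_lambda n (Ak n alo ahi k) * mx_vec n (mx_pow n (Ak n alo ahi k) (n^2)) y i)
                          (mx_vec n (mx_pow n (Ak n alo ahi k) (n^2 + 1)) y))"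
  have Q12: "?Q1 \<longleftrightarrow> ?Q2"
  proof -
    have "Attr n (Ak n alo ahi k) \<inter> box n xlo xhi \<noteq> {} \<longleftrightarrow>
          (\<not> is_zero_mx n (Ak n alo ahi k) \<longrightarrow>
              (\<exists>y\<in>box n xlo xhi.
                 vec_eq n (\<lambda>i. mx_lambda n (Ak n alo ahi k) * mx_vec n (mx_pow n (Ak n alo ahi k) (n^2)) y i)
                          (mx_vec n (mx_pow n (Ak n alo ahi k) (n^2 + 1)) y)))" for k
    proof -
      have ch: "y \<in> box n xlo xhi \<Longrightarrow> (y \<in> Attr n (Ak n alo ahi k) \<longleftrightarrow>
                 vec_eq n (\<lambda>i. mx_lambda n (Ak n alo ahi k) * mx_vec n (mx_pow n (Ak n alo ahi k) (n^2)) y i)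
                          (mx_vec n (mx_pow n (Ak n alo ahi k) (n^2 + 1)) y))" for y
        using CHAR[OF n bk_nn box_nn N, of y k] unfolding Ak vec_eq_def by auto
      show ?thesis
      proof (cases "is_zero_mx n (Ak n alo ahi k)")
        case True
        then have "\<forall>t<n. bk k t = 0" unfolding Ak is_zero_mx_def Circ_def
          by (metis add_cancel_right_left add_diff_cancel_left' mod_add_self2 mod_less n)
        then have "xlo \<in> Attr n (Ak n alo ahi k)" unfolding Ak
          using Attr_zero[OF n _ box_nn[OF xlo_box]] by blast
        then show ?thesis using True xlo_box by blast
      next
        case False
        then show ?thesis using ch by blast
      qed
    qed
    then show ?thesis by blast
  qed
  have R: "tol_robust n (IC n alo ahi lc rc) (box n xlo xhi) \<longleftrightarrow> ?Q1"
  proof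
    assume "tol_robust n (IC n alo ahi lc rc) (box n xlo xhi)"
    then show ?Q1 using robust_imp[OF n X a_nonneg a_nonempty] by blast
  next
    assume Q1: ?Q1
    show "tol_robust n (IC n alo ahi lc rc) (box n xlo xhi)"
      unfolding tol_robust_def
    proof
      fix A assume "A \<in> IC n alo ahi lc rc"
      then obtain a where A: "A = Circ n a" and aiv: "\<forall>t<n. a t \<in> ival (alo t) (ahi t) (lc t) (rc t)"
        unfolding IC_def by blast
      have ab: "\<forall>t<n. alo t \<le> a t \<and> a t \<le> ahi t" using aiv ival_bounds by blast
      have a_nn: "\<forall>t<n. 0 \<le> a t"
      proof (intro allI impI)
        fix t assume "t < n" then show "0 \<le> a t" using ab a_nonneg by force
      qed
      obtain m0 where m0: "m0 < n" "(MAX t\<in>{..<n}. a t) = a m0" using Max_lessThan_obtain[OF n, of a] by blast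
      have amax: "\<forall>t<n. a t \<le> a m0" using m0 Max_lessThan_ge[of _ n a] by metis
      show "\<exists>x\<in>box n xlo xhi. x \<in> Attr n A"
      proof (cases "0 < a m0")
        case False
        then have "\<forall>t<n. a t = 0" using amax a_nn by force
        then show ?thesis unfolding A using Attr_zero[OF n _ box_nn[OF xlo_box]] xlo_box by blast
      next
        case True
        have ca: "circ n a m0" using n a_nn m0 amax True by unfold_locales auto
        have b0: "bk m0 m0 = ahi m0" by (simp add: bk_def)
        have hi: "a m0 \<le> ahi m0" using ab m0 by blast
        have cb: "circ n (bk m0) m0"
        proof
          show "0 < n" "\<forall>t<n. 0 \<le> bk m0 t" "m0 < n" using n bk_nn m0 by auto
          show "0 < bk m0 m0" using b0 hi True by simp
          show "\<forall>t<n. bk m0 t \<le> bk m0 m0"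
          proof (intro allI impI)
            fix t assume t: "t < n"
            show "bk m0 t \<le> bk m0 m0"
            proof (cases "t = m0")
              case True then show ?thesis by simp
            next
              case False
              then have "bk m0 t = alo t" by (simp add: bk_def)
              also have "\<dots> \<le> a t" using ab t by blast
              also have "\<dots> \<le> a m0" using amax t by blast
              also have "\<dots> \<le> bk m0 m0" using b0 hi by simp
              finally show ?thesis .
            qed
          qed
        qed
        have le: "\<forall>t<n. bk m0 t / bk m0 m0 \<le> a t / a m0"
        proof (intro allI impI)
          fix t assume t: "t < n"
          show "bk m0 t / bk m0 m0 \<le> a t / a m0"
          proof (cases "t = m0")
            case True then show ?thesis using b0 hi \<open>0 < a m0\<close> by simp
          next
            case False
            then have "bk m0 t / bk m0 m0 = alo t / ahi m0" by (simp add: bk_def)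
            also have "\<dots> \<le> a t / ahi m0" using ab t hi True by (intro divide_right_mono) auto
            also have "\<dots> \<le> a t / a m0" using a_nn t hi True by (intro divide_left_mono) auto
            finally show ?thesis .
          qed
        qed
        obtain y where y: "y \<in> Attr n (Ak n alo ahi m0)" "y \<in> box n xlo xhi" using Q1 m0 by blast
        have "y \<in> Attr n (Circ n a)"
          using Attr_mono[OF ca cb le box_nn[OF y(2)]] y(1) unfolding Ak by blast
        then show ?thesis using y(2) A by blast
      qed
    qed
  qed
  show ?thesis using R Q12 by blast
qed


end
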